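(* For all types $\sigma,\tau$ (both in $\mathcal{T}_D$ or both in $\mathcal{T}_C$): if $\sigma\le\tau$ then $[\![\sigma]\!]\subseteq[\![\tau]\!]$.
   Context: $\lambda\mu$-calculus (Parigot). Terms $M,N ::= x \mid \lambda x.M \mid MN \mid \mu\alpha.[\beta]M$ over disjoint denumerable sets of term variables and names. Structural substitution $T[\alpha\Leftarrow L]$ replaces every subterm $[\alpha]N$ of $T$ by $[\alpha]N'L$ where $N'=N[\alpha\Leftarrow L]$ (recursively). Reduction is the compatible closure of $(\lambda x.M)N\to M[N/x]$ (capture-avoiding) and $(\mu\beta.[\gamma]M)N\to\mu\beta.(([\gamma]M)[\beta\Leftarrow N])$. $\mathcal{SN}$ is the set of terms with no infinite reduction sequence. A stack is a finite (possibly empty) sequence $\vec L=L_1:\cdots:L_k$ of terms, and $M\vec L$ denotes $ML_1\cdots L_k$; $\mathcal{SN}^*$ is the set of stacks of terms in $\mathcal{SN}$. Types: with constant $\nu$ and symbol $\omega$ (not itself a type), $\mathcal{T}_D:\ \delta ::= \nu \mid \omega\to\nu \mid \kappa\to\nu \mid \delta\wedge\delta$; $\mathcal{T}_C:\ \kappa ::= \delta\times\omega \mid \delta\times\kappa \mid \kappa\wedge\kappa$ ($\times$ right-associative). $\le$ is the least preorder on $\mathcal{T}_D$ and on $\mathcal{T}_C$ such that: $\sigma\wedge\tau\le\sigma$; $\sigma\wedge\tau\le\tau$; $\nu\le\omega\to\nu$; $\omega\to\nu\le\nu$; $\delta_1\times\delta_2\times\omega\le\delta_1\times\omega$; $(\delta_1\times\omega)\wedge(\delta_2\times\kappa)\le(\delta_1\wedge\delta_2)\times\kappa$;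 $(\delta_1\times\kappa_1)\wedge(\delta_2\times\kappa_2)\le(\delta_1\wedge\delta_2)\times(\kappa_1\wedge\kappa_2)$; $\delta_1\le\delta_2\Rightarrow\delta_1\times\omega\le\delta_2\times\omega$; $\delta_1\le\delta_2,\kappa_1\le\kappa_2\Rightarrow\delta_1\times\kappa_1\le\delta_2\times\kappa_2$; $\sigma\le\tau_1,\sigma\le\tau_2\Rightarrow\sigma\le\tau_1\wedge\tau_2$; $\kappa_2\le\kappa_1\Rightarrow\kappa_1\to\nu\le\kappa_2\to\nu$. Interpretation: $[\![\nu]\!]=[\![\omega\to\nu]\!]=\mathcal{SN}$; $[\![\kappa\to\nu]\!]=\{M\mid \forall\vec L\in[\![\kappa]\!].\ M\vec L\in\mathcal{SN}\}$; $[\![\delta\times\omega]\!]=\{N:\vec L\mid N\in[\![\delta]\!],\vec L\in\mathcal{SN}^*\}$; $[\![\delta\times\kappa]\!]=\{N:\vec L\mid N\in[\![\delta]\!],\vec L\in[\![\kappa]\!]\}$; $[\![\sigma\wedge\tau]\!]=[\![\sigma]\!]\cap[\![\tau]\!]$. *)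

theory Defs
  imports Main
begin

text \<open>Mu b M represents mu alpha.[beta]M, where the bound name alpha has name index 0
inside, and b is the (de Bruijn) name index of beta. Lam binds term variable index 0.
Term variables and names live in separate index spaces.\<close>

datatype trm = Var nat | Lam trm | App trm trm | Mu nat trm

primrec liftT :: "nat \<Rightarrow> trm \<Rightarrow> trm" where
  "liftT k (Var x) = (if x < k then Var x else Var (Suc x))"
| "liftT k (Lam M) = Lam (liftT (Suc k) M)"
| "liftT k (App M N) = App (liftT k M) (liftT k N)"
| "liftT k (Mu b M) = Mu b (liftT k M)"

primrec liftN :: "nat \<Rightarrow> trm \<Rightarrow> trm" where
  "liftN k (Var x) = Var x"
| "liftN k (Lam M) = Lam (liftN k M)"
| "liftN k (App M N) = App (liftN k M) (liftN k N)"
| "liftN k (Mu b M) = Mu (if b < k then b else Suc b) (liftN (Suc k) M)"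

primrec substT :: "nat \<Rightarrow> trm \<Rightarrow> trm \<Rightarrow> trm" where
  "substT k N (Var x) = (if x = k then N else if k < x then Var (x - 1) else Var x)"
| "substT k N (Lam M) = Lam (substT (Suc k) (liftT 0 N) M)"
| "substT k N (App M1 M2) = App (substT k N M1) (substT k N M2)"
| "substT k N (Mu b M) = Mu b (substT k (liftN 0 N) M)"

text \<open>Structural substitution T[k <= L]: every [k]N becomes [k](N' L).\<close>
primrec sstruct :: "nat \<Rightarrow> trm \<Rightarrow> trm \<Rightarrow> trm" where
  "sstruct k L (Var x) = Var x"
| "sstruct k L (Lam M) = Lam (sstruct k (liftT 0 L) M)"
| "sstruct k L (App M1 M2) = App (sstruct k L M1) (sstruct k L M2)"
| "sstruct k L (Mu b M) =
     Mu b (if b = Suc k then App (sstruct (Suc k) (liftN 0 L) M) (liftN 0 L)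
           else sstruct (Suc k) (liftN 0 L) M)"

inductive red :: "trm \<Rightarrow> trm \<Rightarrow> bool" where
  beta: "red (App (Lam M) N) (substT 0 N M)"
| mu: "red (App (Mu b M) N)
          (Mu b (if b = 0 then App (sstruct 0 (liftN 0 N) M) (liftN 0 N)
                 else sstruct 0 (liftN 0 N) M))"
| lam: "red M M' \<Longrightarrow> red (Lam M) (Lam M')"
| appL: "red M M' \<Longrightarrow> red (App M N) (App M' N)"
| appR: "red N N' \<Longrightarrow> red (App M N) (App M N')"
| muC: "red M M' \<Longrightarrow> red (Mu b M) (Mu b M')"

definition SN :: "trm set" where
  "SN = {M. \<not> (\<exists>f. f 0 = M \<and> (\<forall>i. red (f i) (f (Suc i))))}"

text \<open>Stacks are lists; apps M [L1,...,Lk] = M L1 ... Lk.\<close>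
definition apps :: "trm \<Rightarrow> trm list \<Rightarrow> trm" where
  "apps M Ls = foldl App M Ls"

definition SNstar :: "trm list set" where
  "SNstar = {Ls. set Ls \<subseteq> SN}"

text \<open>D: delta ::= nu | omega->nu | kappa->nu | delta /\ delta;
      C: kappa ::= delta x omega | delta x kappa | kappa /\ kappa.\<close>
datatype tD = Nu | OmegaArr | KArr tC | DAnd tD tD
     and tC = TimesOm tD | Times tD tC | CAnd tC tC

inductive leD :: "tD \<Rightarrow> tD \<Rightarrow> bool"
      and leC :: "tC \<Rightarrow> tC \<Rightarrow> bool" where
  D_refl: "leD s s"
| D_trans: "leD s t \<Longrightarrow> leD t u \<Longrightarrow> leD s u"
| D_andE1: "leD (DAnd s t) s"
| D_andE2: "leD (DAnd s t) t"
| D_nu_om: "leD Nu OmegaArr"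
| D_om_nu: "leD OmegaArr Nu"
| D_andI: "leD s t1 \<Longrightarrow> leD s t2 \<Longrightarrow> leD s (DAnd t1 t2)"
| D_arr: "leC k2 k1 \<Longrightarrow> leD (KArr k1) (KArr k2)"
| C_refl: "leC s s"
| C_trans: "leC s t \<Longrightarrow> leC t u \<Longrightarrow> leC s u"
| C_andE1: "leC (CAnd s t) s"
| C_andE2: "leC (CAnd s t) t"
| C_proj: "leC (Times d1 (TimesOm d2)) (TimesOm d1)"
| C_and_om: "leC (CAnd (TimesOm d1) (Times d2 k)) (Times (DAnd d1 d2) k)"
| C_and_k: "leC (CAnd (Times d1 k1) (Times d2 k2)) (Times (DAnd d1 d2) (CAnd k1 k2))"
| C_mono_om: "leD d1 d2 \<Longrightarrow> leC (TimesOm d1) (TimesOm d2)"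
| C_mono: "leD d1 d2 \<Longrightarrow> leC k1 k2 \<Longrightarrow> leC (Times d1 k1) (Times d2 k2)"
| C_andI: "leC s t1 \<Longrightarrow> leC s t2 \<Longrightarrow> leC s (CAnd t1 t2)"

primrec interpD :: "tD \<Rightarrow> trm set"
    and interpC :: "tC \<Rightarrow> trm list set" where
  "interpD Nu = SN"
| "interpD OmegaArr = SN"
| "interpD (KArr k) = {M. \<forall>Ls \<in> interpC k. apps M Ls \<in> SN}"
| "interpD (DAnd s t) = interpD s \<inter> interpD t"
| "interpC (TimesOm d) = {N # Ls | N Ls. N \<in> interpD d \<and> Ls \<in> SNstar}"
| "interpC (Times d k) = {N # Ls | N Ls. N \<in> interpD d \<and> Ls \<in> interpC k}"
| "interpC (CAnd s t) = interpC s \<inter> interpC t"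

end

theory Submission
  imports Defs
begin

inductive sn :: "trm \<Rightarrow> bool" where
  snI: "(\<And>N. red M N \<Longrightarrow> sn N) \<Longrightarrow> sn M"

lemma sn_SN: "sn M \<Longrightarrow> M \<in> SN"
proof (induction rule: sn.induct)
  case (snI M)
  have "\<not> (\<exists>f. f 0 = M \<and> (\<forall>i. red (f i) (f (Suc i))))"
  proof
    assume "\<exists>f. f 0 = M \<and> (\<forall>i. red (f i) (f (Suc i)))"
    then obtain f where f0: "f 0 = M" and ch: "\<forall>i. red (f i) (f (Suc i))" by blast
    have "red M (f 1)" using ch f0 by (metis One_nat_def)
    hence "f 1 \<in> SN" using snI by blast
    hence "\<not> (\<exists>g. g 0 = f 1 \<and> (\<forall>i. red (g i) (g (Suc i))))" unfolding SN_def by simp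
    moreover have "\<exists>g. g 0 = f 1 \<and> (\<forall>i. red (g i) (g (Suc i)))"
    proof (intro exI conjI)
      show "(\<lambda>i. f (Suc i)) 0 = f 1" by simp
      show "\<forall>i. red ((\<lambda>i. f (Suc i)) i) ((\<lambda>i. f (Suc i)) (Suc i))" using ch by simp
    qed
    ultimately show False by blast
  qed
  thus ?case unfolding SN_def by simp
qed

lemma SN_sn: "M \<in> SN \<Longrightarrow> sn M"
proof (rule ccontr)
  assume M: "M \<in> SN" and n: "\<not> sn M"
  have step: "\<And>P. \<not> sn P \<Longrightarrow> \<exists>Q. red P Q \<and> \<not> sn Q"
    by (meson sn.intros)
  define nx where "nx P = (SOME Q. red P Q \<and> \<not> sn Q)" for P
  have nx: "\<And>P. \<not> sn P \<Longrightarrow> red P (nx P) \<and> \<not> sn (nx P)"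
    unfolding nx_def using step by (rule someI_ex)
  define f where "f i = (nx ^^ i) M" for i
  have nf: "\<not> sn (f i)" for i
    by (induction i) (auto simp: f_def n nx)
  have "red (f i) (f (Suc i))" for i
    using nx[OF nf[of i]] by (simp add: f_def)
  moreover have "f 0 = M" by (simp add: f_def)
  ultimately show False using M unfolding SN_def by blast
qed

lemma SN_iff: "M \<in> SN \<longleftrightarrow> sn M"
  using sn_SN SN_sn by blast

lemma sn_red: "sn M \<Longrightarrow> red M N \<Longrightarrow> sn N"
  by (induction rule: sn.induct) auto

lemma sn_AppL: "sn P \<Longrightarrow> P = App M N \<Longrightarrow> sn M"
proof (induction arbitrary: M rule: sn.induct)
  case (snI P)
  show ?case
  proof (rule sn.intros)
    fix M' assume "red M M'"
    hence "red P (App M' N)" using snI.prems by (simp add: red.appL)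
    thus "sn M'" using snI.IH by blast
  qed
qed

lemma apps_snoc: "apps M (Ls @ [L]) = App (apps M Ls) L"
  by (simp add: apps_def)

lemma apps_Cons: "apps M (L # Ls) = apps (App M L) Ls"
  by (simp add: apps_def)

lemma sn_apps: "sn (apps M Ls) \<Longrightarrow> sn M"
proof (induction Ls rule: rev_induct)
  case Nil thus ?case by (simp add: apps_def)
next
  case (snoc L Ls)
  thus ?case using sn_AppL apps_snoc by metis
qed

definition neutral :: "trm \<Rightarrow> bool" where
  "neutral M = (\<exists>x Ls. M = apps (Var x) Ls)"

lemma neutral_red: "red M N \<Longrightarrow> neutral M \<Longrightarrow> neutral N"
proof (induction rule: red.induct)
  case (beta M N)
  then obtain x Ls where e: "App (Lam M) N = apps (Var x) Ls" unfolding neutral_def by blast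
  show ?case
  proof (cases Ls rule: rev_cases)
    case Nil thus ?thesis using e by (simp add: apps_def)
  next
    case (snoc ys y)
    hence "Lam M = apps (Var x) ys" using e by (simp add: apps_snoc)
    thus ?thesis by (cases ys rule: rev_cases) (auto simp: apps_def)
  qed
next
  case (mu b M N)
  then obtain x Ls where e: "App (Mu b M) N = apps (Var x) Ls" unfolding neutral_def by blast
  show ?case
  proof (cases Ls rule: rev_cases)
    case Nil thus ?thesis using e by (simp add: apps_def)
  next
    case (snoc ys y)
    hence "Mu b M = apps (Var x) ys" using e by (simp add: apps_snoc)
    thus ?thesis by (cases ys rule: rev_cases) (auto simp: apps_def)
  qed
next
  case (lam M M')
  then obtain x Ls where e: "Lam M = apps (Var x) Ls" unfolding neutral_def by blast
  thus ?case by (cases Ls rule: rev_cases) (auto simp: apps_def)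
next
  case (appL M M' N)
  then obtain x Ls where e: "App M N = apps (Var x) Ls" unfolding neutral_def by blast
  show ?case
  proof (cases Ls rule: rev_cases)
    case Nil thus ?thesis using e by (simp add: apps_def)
  next
    case (snoc ys y)
    hence "M = apps (Var x) ys" "N = y" using e by (simp_all add: apps_snoc)
    hence "neutral M" unfolding neutral_def by blast
    hence "neutral M'" using appL.IH by blast
    then obtain z zs where "M' = apps (Var z) zs" unfolding neutral_def by blast
    hence "App M' N = apps (Var z) (zs @ [N])" by (simp add: apps_snoc)
    thus ?thesis unfolding neutral_def by blast
  qed
next
  case (appR N N' M)
  then obtain x Ls where e: "App M N = apps (Var x) Ls" unfolding neutral_def by blast
  show ?case
  proof (cases Ls rule: rev_cases)
    case Nil thus ?thesis using e by (simp add: apps_def)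
  next
    case (snoc ys y)
    hence "M = apps (Var x) ys" using e by (simp_all add: apps_snoc)
    hence "App M N' = apps (Var x) (ys @ [N'])" by (simp add: apps_snoc)
    thus ?thesis unfolding neutral_def by blast
  qed
next
  case (muC M M' b)
  then obtain x Ls where e: "Mu b M = apps (Var x) Ls" unfolding neutral_def by blast
  thus ?case by (cases Ls rule: rev_cases) (auto simp: apps_def)
qed

lemma red_App_neutral:
  assumes "red (App A L) P" "neutral A"
  shows "(\<exists>A'. red A A' \<and> P = App A' L) \<or> (\<exists>L'. red L L' \<and> P = App A L')"
  using assms(1)
proof (cases rule: red.cases)
  case (beta M)
  then obtain x Ls where "Lam M = apps (Var x) Ls" using assms(2) unfolding neutral_def by blast
  thus ?thesis by (cases Ls rule: rev_cases) (auto simp: apps_def)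
next
  case (mu b M)
  then obtain x Ls where "Mu b M = apps (Var x) Ls" using assms(2) unfolding neutral_def by blast
  thus ?thesis by (cases Ls rule: rev_cases) (auto simp: apps_def)
qed auto

lemma sn_App_neutral: "sn A \<Longrightarrow> neutral A \<Longrightarrow> sn L \<Longrightarrow> sn (App A L)"
proof (induction A arbitrary: L rule: sn.induct)
  case (snI A)
  note outer = snI.IH
  from snI.prems(2) show ?case
  proof (induction L rule: sn.induct)
    case (snI L)
    show ?case
    proof (rule sn.intros)
      fix P assume "red (App A L) P"
      from red_App_neutral[OF this \<open>neutral A\<close>] show "sn P"
      proof
        assume "\<exists>A'. red A A' \<and> P = App A' L"
        then obtain A' where "red A A'" "P = App A' L" by blast
        moreover have "sn L" using snI.hyps by (rule sn.intros)
        ultimately show ?thesis using outer neutral_red \<open>neutral A\<close> by blast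
      next
        assume "\<exists>L'. red L L' \<and> P = App A L'"
        thus ?thesis using snI.IH by blast
      qed
    qed
  qed
qed

lemma sn_Var: "sn (Var x)"
  by (rule sn.intros) (erule red.cases; simp)

lemma sn_apps_Var: "set Ls \<subseteq> SN \<Longrightarrow> apps (Var x) Ls \<in> SN"
proof (induction Ls rule: rev_induct)
  case Nil thus ?case by (simp add: apps_def SN_iff sn_Var)
next
  case (snoc L Ls)
  have "neutral (apps (Var x) Ls)" unfolding neutral_def by blast
  thus ?case using snoc sn_App_neutral by (simp add: apps_snoc SN_iff)
qed

lemma basic:
  "(\<forall>x. Var x \<in> interpD d) \<and> interpD d \<subseteq> SN"
  "(\<exists>n. \<forall>m\<ge>n. replicate m (Var 0) \<in> interpC k) \<and> interpC k \<subseteq> SNstar"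
proof (induction d and k)
  case Nu thus ?case by (simp add: SN_iff sn_Var)
next
  case OmegaArr thus ?case by (simp add: SN_iff sn_Var)
next
  case (KArr k)
  then obtain n where n: "\<forall>m\<ge>n. replicate m (Var 0) \<in> interpC k" by blast
  have "interpD (KArr k) \<subseteq> SN"
  proof
    fix M assume "M \<in> interpD (KArr k)"
    hence "apps M (replicate n (Var 0)) \<in> SN" using n by auto
    thus "M \<in> SN" using sn_apps SN_iff by blast
  qed
  moreover have "Var x \<in> interpD (KArr k)" for x
    using KArr sn_apps_Var unfolding SNstar_def by auto
  ultimately show ?case by blast
next
  case (DAnd d1 d2) thus ?case by auto
next
  case (TimesOm d)
  have "replicate m (Var 0) \<in> interpC (TimesOm d)" if "m \<ge> 1" for m
  proof -
    obtain j where "m = Suc j" using \<open>m \<ge> 1\<close> not0_implies_Suc by fastforce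
    then show ?thesis using TimesOm by (auto simp: SNstar_def SN_iff sn_Var)
  qed
  moreover have "interpC (TimesOm d) \<subseteq> SNstar" using TimesOm by (auto simp: SNstar_def)
  ultimately show ?case by blast
next
  case (Times d k)
  then obtain n where n: "\<forall>m\<ge>n. replicate m (Var 0) \<in> interpC k" by blast
  have "replicate m (Var 0) \<in> interpC (Times d k)" if "m \<ge> Suc n" for m
  proof -
    obtain j where "m = Suc j" "j \<ge> n" using \<open>m \<ge> Suc n\<close> by (metis Suc_le_D Suc_le_mono)
    then show ?thesis using Times n by (auto simp: SNstar_def)
  qed
  moreover have "interpC (Times d k) \<subseteq> SNstar"
  proof
    fix xs assume "xs \<in> interpC (Times d k)"
    then obtain N Ls where "xs = N # Ls" "N \<in> interpD d" "Ls \<in> interpC k" by auto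
    moreover have "N \<in> SN" using Times.IH(1) \<open>N \<in> interpD d\<close> by blast
    moreover have "Ls \<in> SNstar" using Times.IH(2) \<open>Ls \<in> interpC k\<close> by blast
    ultimately show "xs \<in> SNstar" by (simp add: SNstar_def)
  qed
  ultimately show ?case by blast
next
  case (CAnd k1 k2)
  then obtain n1 n2 where "\<forall>m\<ge>n1. replicate m (Var 0) \<in> interpC k1"
     "\<forall>m\<ge>n2. replicate m (Var 0) \<in> interpC k2" by blast
  hence "\<forall>m\<ge>max n1 n2. replicate m (Var 0) \<in> interpC (CAnd k1 k2)" by auto
  hence "\<exists>n. \<forall>m\<ge>n. replicate m (Var 0) \<in> interpC (CAnd k1 k2)" by blast
  moreover have "interpC (CAnd k1 k2) \<subseteq> SNstar" using CAnd by auto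
  ultimately show ?case by blast
qed

theorem mainTheorem10:
  shows "(\<forall>\<sigma> \<tau>. leD \<sigma> \<tau> \<longrightarrow> interpD \<sigma> \<subseteq> interpD \<tau>) \<and>
         (\<forall>\<sigma> \<tau>. leC \<sigma> \<tau> \<longrightarrow> interpC \<sigma> \<subseteq> interpC \<tau>)"
proof -
  have "(leD s t \<longrightarrow> interpD s \<subseteq> interpD t) \<and> (leC s' t' \<longrightarrow> interpC s' \<subseteq> interpC t')" for s t s' t'
  proof -
    have "leD s t \<Longrightarrow> interpD s \<subseteq> interpD t" "leC s' t' \<Longrightarrow> interpC s' \<subseteq> interpC t'"
    proof (induction rule: leD_leC.inducts)
      case (C_proj d1 d2)
      show ?case using basic(1)[of d2] by (auto simp: SNstar_def)
    next
      case (C_and_om d1 d2 k)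
      show ?case using basic(2)[of k] by (auto simp: SNstar_def)
    qed auto
    thus ?thesis by blast
  qed
  thus ?thesis by blast
qed

end
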